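(* Let $m,n$ be nonnegative integers with $m>n$, let $\varepsilon\in\{+1,-1\}$, and let $z\in\mathbb{C}\setminus(-\infty,1]$. Then \[ \frac{\mathrm{d}^{m}}{\mathrm{d}z^{m}}\bigl[P_{n}(z)\ln(z+\varepsilon)\bigr] =(-\varepsilon)^{n}(-1)^{m+1}(n+m)!\,(m-n-1)!\,(z^{2}-1)^{-m/2}P_{n}^{-m}(\varepsilon z). \]
   Context: $P_n(z)$ denotes the Legendre polynomial of degree $n$. The complex plane is cut along the real axis from $-\infty$ to $+1$; for $z\in\mathbb{C}\setminus(-\infty,1]$, $\ln(z\pm1)$ and all fractional powers $(z\pm1)^{s}$ denote principal branches, and $(z^{2}-1)^{-m/2}:=(z-1)^{-m/2}(z+1)^{-m/2}$. The associated Legendre function of the first kind of negative integer order is $P_{n}^{-m}(\zeta)=\frac{1}{m!}\left(\frac{\zeta-1}{\zeta+1}\right)^{m/2}{}_{2}F_{1}\!\left(-n,n+1;1+m;\frac{1-\zeta}{2}\right)$, where for $\zeta=z$ one takes $\left(\frac{z-1}{z+1}\right)^{m/2}:=(z-1)^{m/2}(z+1)^{-m/2}$, and for $\zeta=-z$ one takes $\left(\frac{-z-1}{-z+1}\right)^{m/2}:=(z+1)^{m/2}(z-1)^{-m/2}$ (consistent with $-z\mp1=\mathrm{e}^{\mp\mathrm{i}\pi}(z\pm1)$ on the cut plane). The case $\varepsilon=+1$ concerns $\ln(z+1)$ and the case $\varepsilon=-1$ concerns $\ln(z-1)$. *)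

theory Defs
  imports "HOL-Analysis.Analysis"
begin

definition hyp2F1 :: "complex \<Rightarrow> complex \<Rightarrow> complex \<Rightarrow> complex \<Rightarrow> complex" where
  "hyp2F1 a b c x = (\<Sum>k. pochhammer a k * pochhammer b k / (pochhammer c k * fact k) * x ^ k)"

text \<open>Legendre polynomial of degree n (explicit standard formula,
  equal to 2F1(-n,n+1;1;(1-z)/2)).\<close>
definition legendreP :: "nat \<Rightarrow> complex \<Rightarrow> complex" where
  "legendreP n z = (\<Sum>k\<le>n. of_nat (n choose k) * of_nat ((n + k) choose k) * ((z - 1) / 2) ^ k)"

text \<open>P_n^{-m}(eps*z) for z in the cut plane, with the branch conventions of the paper:
  eps = 1:  ((z-1)/(z+1))^{m/2} := (z-1)^{m/2} (z+1)^{-m/2};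
  eps = -1: ((-z-1)/(-z+1))^{m/2} := (z+1)^{m/2} (z-1)^{-m/2}.\<close>
definition assocP_neg :: "nat \<Rightarrow> nat \<Rightarrow> int \<Rightarrow> complex \<Rightarrow> complex" where
  "assocP_neg n m eps z =
     (1 / fact m) *
     (if eps = 1 then (z - 1) powr (of_nat m / 2) * (z + 1) powr (- (of_nat m / 2))
      else (z + 1) powr (of_nat m / 2) * (z - 1) powr (- (of_nat m / 2))) *
     hyp2F1 (- of_nat n) (of_nat n + 1) (1 + of_nat m) ((1 - of_int eps * z) / 2)"

end

theory Submission
  imports Defs "HOL-Complex_Analysis.Complex_Analysis" "HOL-Computational_Algebra.Formal_Power_Series"
begin


lemma of_nat_eq_neg_iff: "(of_nat a :: complex) = - of_nat b \<longleftrightarrow> a = 0 \<and> b = 0"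
proof
  assume "(of_nat a :: complex) = - of_nat b"
  then have "(of_nat (a+b) :: complex) = 0" by (simp add: algebra_simps)
  then show "a = 0 \<and> b = 0" by (simp only: of_nat_eq_0_iff) simp
qed simp

lemma of_nat_add_eq_neg_iff: "(of_nat a + of_nat c :: complex) = - of_nat b \<longleftrightarrow> a = 0 \<and> b = 0 \<and> c = 0"
  using of_nat_eq_neg_iff[of "a+c" b] by auto

lemma lemG:
  fixes b :: complex and p j n :: nat
  assumes jn: "j \<le> n" and p: "p \<ge> 1"
  shows "(\<Sum>k=j..n. pochhammer (-of_nat n) k * pochhammer b k / (pochhammer (of_nat p) k * fact k) * of_nat (k choose j))
       = pochhammer (-of_nat n) j * pochhammer b j / (pochhammer (of_nat p) j * fact j) *
         (pochhammer (of_nat p - b) (n-j) / pochhammer (of_nat (p+j)) (n-j))"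
proof -
  define X where "X = pochhammer (-of_nat n) j * pochhammer b j / (pochhammer (of_nat p) j * fact j :: complex)"
  have trm: "pochhammer (-of_nat n) (j+i) * pochhammer b (j+i) / (pochhammer (of_nat p) (j+i) * fact (j+i)) * of_nat ((j+i) choose j)
     = X * (pochhammer (b + of_nat j) i * pochhammer (- of_nat (n-j)) i / (fact i * pochhammer (of_nat (p+j)) i))" for i
  proof -
    have e1: "-of_nat n + of_nat j = (- of_nat (n-j) :: complex)" using jn by (simp add: of_nat_diff)
    have f: "(fact (j+i) :: complex) = fact j * fact i * of_nat ((j+i) choose j)"
      using binomial_fact_lemma[of j "j+i"] by (metis add_diff_cancel_left' le_add1 of_nat_fact of_nat_mult)
    have nz: "pochhammer (of_nat p) j \<noteq> (0::complex)" "pochhammer (of_nat (p+j)) i \<noteq> (0::complex)"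
      using p by (auto simp: pochhammer_eq_0_iff of_nat_eq_neg_iff of_nat_add_eq_neg_iff)
    have nz2: "of_nat ((j+i) choose j) \<noteq> (0::complex)" by simp
    show ?thesis unfolding X_def pochhammer_product' e1 f
      using nz nz2 by (simp add: field_simps)
  qed
  have cnd: "\<forall>i\<in>{0..<n-j}. (of_nat (p+j) :: complex) \<noteq> - of_nat i" using p by (auto simp: of_nat_add_eq_neg_iff)
  have "(\<Sum>k=j..n. pochhammer (-of_nat n) k * pochhammer b k / (pochhammer (of_nat p) k * fact k) * of_nat (k choose j))
     = (\<Sum>i=0..n-j. X * (pochhammer (b + of_nat j) i * pochhammer (- of_nat (n-j)) i / (fact i * pochhammer (of_nat (p+j)) i)))"
    by (subst sum.atLeastAtMost_shift_0[OF jn]) (rule sum.cong, simp, simp only: o_apply trm)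
  also have "\<dots> = X * (\<Sum>i=0..n-j. pochhammer (b + of_nat j) i * pochhammer (- of_nat (n-j)) i / (of_nat (fact i) * pochhammer (of_nat (p+j)) i))"
    by (simp add: sum_distrib_left)
  also have "\<dots> = X * (pochhammer (of_nat (p+j) - (b + of_nat j)) (n-j) / pochhammer (of_nat (p+j)) (n-j))"
    by (subst Vandermonde_pochhammer[OF cnd]) simp
  finally show ?thesis unfolding X_def by simp
qed

lemma choose_poch1: "(of_nat (n choose k) :: complex) = (-1)^k * pochhammer (-of_nat n) k / fact k"
  by (simp add: binomial_gbinomial gbinomial_pochhammer)

lemma choose_poch2: "(of_nat ((n+k) choose k) :: complex) = pochhammer (of_nat n + 1) k / fact k"
  by (simp add: binomial_gbinomial gbinomial_pochhammer')

lemma sum_swap_tri: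
  fixes g :: "nat \<Rightarrow> nat \<Rightarrow> complex"
  shows "(\<Sum>k\<le>n. \<Sum>j\<le>k. g k j) = (\<Sum>j\<le>n. \<Sum>k=j..n. g k j)"
proof -
  have "(\<Sum>k\<le>n. \<Sum>j\<le>k. g k j) = (\<Sum>k\<le>n. \<Sum>j\<le>n. if j \<le> k then g k j else 0)"
  proof (rule sum.cong[OF refl])
    fix k assume "k \<in> {..n}"
    then have "{..n} \<inter> {j. j \<le> k} = {..k}" by auto
    then show "(\<Sum>j\<le>k. g k j) = (\<Sum>j\<le>n. if j \<le> k then g k j else 0)"
      by (simp add: sum.If_cases)
  qed
  also have "\<dots> = (\<Sum>j\<le>n. \<Sum>k\<le>n. if j \<le> k then g k j else 0)" by (rule sum.swap)
  also have "\<dots> = (\<Sum>j\<le>n. \<Sum>k=j..n. g k j)"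
  proof (rule sum.cong[OF refl])
    fix j assume "j \<in> {..n}"
    have "{..n} \<inter> {k. j \<le> k} = {j..n}" by auto
    then show "(\<Sum>k\<le>n. if j \<le> k then g k j else 0) = (\<Sum>k=j..n. g k j)"
      by (simp add: sum.If_cases)
  qed
  finally show ?thesis .
qed

lemma cpoch: "(of_nat (n choose k) * of_nat ((n+k) choose k) :: complex) =
   (-1)^k * (pochhammer (-of_nat n) k * pochhammer (of_nat n + 1) k / (pochhammer (of_nat 1) k * fact k))"
  by (simp add: choose_poch1[of n k] choose_poch2[of n k] pochhammer_fact[symmetric])

lemma neg1_pow_diff: "j \<le> n \<Longrightarrow> ((-1)::complex)^n * (-1)^(n-j) = (-1)^j"
proof -
  assume "j \<le> n"
  then have "n + (n - j) = j + 2*(n-j)" by simp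
  then have "((-1)::complex)^n * (-1)^(n-j) = (-1)^(j + 2*(n-j))" by (metis power_add)
  then show ?thesis by (simp add: power_add power_mult)
qed

lemma inner_parity:
  assumes jn: "j \<le> n"
  shows "(\<Sum>k=j..n. (-1)^(n+k) * (of_nat (n choose k) * of_nat ((n+k) choose k)) * of_nat (k choose j) :: complex)
        = of_nat (n choose j) * of_nat ((n+j) choose j)"
proof -
  have "(\<Sum>k=j..n. (-1)^(n+k) * (of_nat (n choose k) * of_nat ((n+k) choose k)) * of_nat (k choose j) :: complex)
     = (-1)^n * (\<Sum>k=j..n. pochhammer (-of_nat n) k * pochhammer (of_nat n + 1) k / (pochhammer (of_nat 1) k * fact k) * of_nat (k choose j))"
    unfolding sum_distrib_left
  proof (rule sum.cong[OF refl])
    fix k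
    have "((-1)::complex)^(n+k) * (-1)^k = (-1)^n"
      by (simp add: power_add mult.assoc power_mult_distrib[symmetric])
    then show "(-1)^(n+k) * (of_nat (n choose k) * of_nat ((n+k) choose k)) * of_nat (k choose j) =
       (-1)^n * (pochhammer (-of_nat n) k * pochhammer (of_nat n + 1) k / (pochhammer (of_nat 1) k * fact k) * of_nat (k choose j) :: complex)"
      unfolding cpoch by (metis (no_types, lifting) mult.assoc)
  qed
  also have "\<dots> = (-1)^n * (pochhammer (-of_nat n) j * pochhammer (of_nat n + 1) j / (pochhammer (of_nat 1) j * fact j) *
         (pochhammer (of_nat 1 - (of_nat n + 1)) (n-j) / pochhammer (of_nat (1+j)) (n-j)))"
    by (subst lemG[OF jn]) auto
  also have "pochhammer (of_nat 1 - (of_nat n + 1)) (n-j) / pochhammer (of_nat (1+j)) (n-j) = ((-1)::complex)^(n-j)"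
  proof -
    have "pochhammer (of_nat 1 - (of_nat n + 1)) (n-j) = ((-1)::complex)^(n-j) * pochhammer (of_nat j + 1) (n-j)"
      using pochhammer_minus[of "of_nat n :: complex" "n-j"] jn by (simp add: of_nat_diff)
    moreover have "pochhammer (of_nat j + 1) (n-j) \<noteq> (0::complex)"
      by (auto simp: pochhammer_eq_0_iff) (metis of_nat_Suc of_nat_eq_neg_iff add.commute nat.distinct(1))
    ultimately show ?thesis by (simp add: add.commute)
  qed
  finally show ?thesis using neg1_pow_diff[OF jn] unfolding cpoch
    by (simp add: algebra_simps)
qed

lemma legendre_alt:
  "legendreP n z = (\<Sum>k\<le>n. (-1)^(n+k) * (of_nat (n choose k) * of_nat ((n+k) choose k)) * ((z+1)/2)^k)"
proof -
  define y where "y = (z-1)/2"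
  have zy: "(z+1)/2 = y + 1" unfolding y_def by (simp add: field_simps)
  have "(\<Sum>k\<le>n. (-1)^(n+k) * (of_nat (n choose k) * of_nat ((n+k) choose k)) * ((z+1)/2)^k)
      = (\<Sum>k\<le>n. \<Sum>j\<le>k. (-1)^(n+k) * (of_nat (n choose k) * of_nat ((n+k) choose k)) * of_nat (k choose j) * y^j)"
    unfolding zy binomial_ring by (simp add: sum_distrib_left mult.assoc)
  also have "\<dots> = (\<Sum>j\<le>n. \<Sum>k=j..n. (-1)^(n+k) * (of_nat (n choose k) * of_nat ((n+k) choose k)) * of_nat (k choose j) * y^j)"
    by (rule sum_swap_tri)
  also have "\<dots> = (\<Sum>j\<le>n. of_nat (n choose j) * of_nat ((n+j) choose j) * y^j)"
  proof (rule sum.cong[OF refl])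
    fix j assume "j \<in> {..n}"
    then show "(\<Sum>k=j..n. (-1)^(n+k) * (of_nat (n choose k) * of_nat ((n+k) choose k)) * of_nat (k choose j) * y^j)
       = of_nat (n choose j) * of_nat ((n+j) choose j) * y^j"
      using inner_parity[of j n] by (simp add: sum_distrib_right[symmetric])
  qed
  finally show ?thesis unfolding legendreP_def y_def by simp
qed

lemma fact_poch: "(fact (q + r) :: complex) = fact q * pochhammer (of_nat q + 1) r"
  by (simp add: pochhammer_fact pochhammer_product' add.commute)

lemma poch_nz: "q > 0 \<Longrightarrow> pochhammer (of_nat q) r \<noteq> (0::complex)"
proof -
  assume "q > 0"
  then have "pochhammer q r > (0::nat)" by (rule pochhammer_pos)
  then show ?thesis by (simp only: pochhammer_of_nat of_nat_eq_0_iff)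
qed

lemma hyp_finite:
  "hyp2F1 (- of_nat n) (of_nat n + 1) c t =
   (\<Sum>j\<le>n. pochhammer (- of_nat n) j * pochhammer (of_nat n + 1) j / (pochhammer c j * fact j) * t ^ j)"
proof -
  have "(\<Sum>j. pochhammer (- of_nat n) j * pochhammer (of_nat n + 1) j / (pochhammer c j * fact j) * t ^ j)
     = (\<Sum>j\<in>{..n}. pochhammer (- of_nat n) j * pochhammer (of_nat n + 1) j / (pochhammer c j * fact j) * t ^ j)"
    by (rule suminf_finite) (auto simp: pochhammer_of_nat_eq_0_iff)
  then show ?thesis unfolding hyp2F1_def by simp
qed

lemma absL:
  fixes A B fm fk s C1 C2 F P X :: complex
  assumes "A \<noteq> 0" "B \<noteq> 0" "fm \<noteq> 0" "fk \<noteq> 0" "s * s = 1"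
  shows "fm * (A * B) * F / fm * (s * X) * (s * fk * C1 * (fk * C2) / (A * fk) * (P / B)) = C1 * C2 * fk * (F * P) * X"
proof -
  have "fm * (A * B) * F / fm * (s * X) * (s * fk * C1 * (fk * C2) / (A * fk) * (P / B)) = (s * s) * C1 * C2 * fk * (F * P) * X"
    using assms(1-4) by (simp add: field_simps)
  then show ?thesis using assms(5) by simp
qed

lemma KI:
  assumes nm: "n < m"
  shows "fact (n+m) * fact (m-n-1) / fact m * hyp2F1 (- of_nat n) (of_nat n + 1) (1 + of_nat m) (1 - x)
       = (\<Sum>k\<le>n. of_nat (n choose k) * of_nat ((n+k) choose k) * fact k * fact (m-k-1) * x^k)"
proof -
  define a where "a j = pochhammer (- of_nat n) j * pochhammer (of_nat n + 1) j / (pochhammer (of_nat (m+1)) j * fact j :: complex)" for j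
  define K where "K = (fact (n+m) * fact (m-n-1) / fact m :: complex)"
  have "hyp2F1 (- of_nat n) (of_nat n + 1) (1 + of_nat m) (1 - x) = (\<Sum>j\<le>n. a j * (1-x)^j)"
    unfolding hyp_finite a_def by (simp add: add.commute)
  also have "\<dots> = (\<Sum>j\<le>n. \<Sum>k\<le>j. a j * of_nat (j choose k) * (-x)^k)"
    using binomial_ring[of "-x" 1] by (simp add: sum_distrib_left mult.assoc)
  also have "\<dots> = (\<Sum>k\<le>n. \<Sum>j=k..n. a j * of_nat (j choose k) * (-x)^k)"
    by (rule sum_swap_tri)
  also have "\<dots> = (\<Sum>k\<le>n. (-x)^k * (\<Sum>j=k..n. a j * of_nat (j choose k)))"
    by (simp add: sum_distrib_left sum_distrib_right mult.commute)
  finally have h: "K * hyp2F1 (- of_nat n) (of_nat n + 1) (1 + of_nat m) (1 - x) =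
      (\<Sum>k\<le>n. K * (-x)^k * (\<Sum>j=k..n. a j * of_nat (j choose k)))"
    by (simp add: sum_distrib_left mult.assoc)
  have per: "K * (-x)^k * (\<Sum>j=k..n. a j * of_nat (j choose k)) =
      of_nat (n choose k) * of_nat ((n+k) choose k) * fact k * fact (m-k-1) * x^k" if kn: "k \<le> n" for k
  proof -
    have s: "(\<Sum>j=k..n. a j * of_nat (j choose k)) = a k * (pochhammer (of_nat (m+1) - (of_nat n + 1)) (n-k) / pochhammer (of_nat (m+1+k)) (n-k))"
      unfolding a_def by (rule lemG[OF kn]) simp
    have e1: "of_nat (m+1) - (of_nat n + 1) = (of_nat (m-n-1) + 1 :: complex)" using nm by (simp add: of_nat_diff)
    have f1: "(fact (m-k-1) :: complex) = fact (m-n-1) * pochhammer (of_nat (m-n-1) + 1) (n-k)"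
    proof -
      have "m-k-1 = (m-n-1) + (n-k)" using nm kn by arith
      then show ?thesis by (simp only: fact_poch)
    qed
    have f2: "(fact (n+m) :: complex) = fact m * (pochhammer (of_nat (m+1)) k * pochhammer (of_nat (m+1+k)) (n-k))"
      using fact_poch[of m n] pochhammer_product[OF kn, of "of_nat (m+1) :: complex"] by (simp add: add.commute add.left_commute)
    have nz1: "pochhammer (of_nat (m+1)) k \<noteq> (0::complex)" "pochhammer (of_nat (m+1+k)) (n-k) \<noteq> (0::complex)"
      by (rule poch_nz, simp)+
    have sg: "((-1)::complex)^k * (-1)^k = 1" by (simp add: power_mult_distrib[symmetric])
    have c0: "fact k * (of_nat (n choose k) :: complex) = (-1)^k * pochhammer (- of_nat n) k"
      using choose_poch1[of n k] by (simp add: field_simps)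
    have c1: "pochhammer (- of_nat n) k = (-1)^k * fact k * (of_nat (n choose k) :: complex)"
      by (simp only: mult.assoc c0) (simp add: mult.assoc[symmetric] sg)
    have c2: "pochhammer (of_nat n + 1) k = fact k * (of_nat ((n+k) choose k) :: complex)"
      using choose_poch2[of n k] by (simp add: field_simps)
    have sg: "((-1)::complex)^k * (-1)^k = 1" by (simp add: power_mult_distrib[symmetric])
    have px: "(-x)^k = (-1)^k * x^k" by (rule power_minus)
    show ?thesis unfolding s unfolding e1 K_def a_def f1 f2 c1 c2 px
      by (rule absL[OF nz1 _ _ sg]) simp_all
  qed
  have "K * hyp2F1 (- of_nat n) (of_nat n + 1) (1 + of_nat m) (1 - x) =
     (\<Sum>k\<le>n. of_nat (n choose k) * of_nat ((n+k) choose k) * fact k * fact (m-k-1) * x^k)"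
    unfolding h by (rule sum.cong[OF refl]) (simp add: per)
  then show ?thesis unfolding K_def .
qed



lemma D1:
  fixes c :: complex
  assumes "w + c \<noteq> 0"
  shows "(deriv ^^ j) (\<lambda>w. inverse (w + c)) w = (-1)^j * fact j * inverse (w+c) ^ Suc j"
  using assms
proof (induction j arbitrary: w)
  case 0 then show ?case by simp
next
  case (Suc j w)
  have op: "open {v. v + c \<noteq> 0}"
    using open_vimage[of "-{0}" "\<lambda>v. v + c"] by (simp add: vimage_def continuous_intros Collect_neg_eq)
  have ev: "eventually (\<lambda>v. (deriv ^^ j) (\<lambda>w. inverse (w + c)) v = (-1)^j * fact j * inverse (v+c) ^ Suc j) (nhds w)"
  proof -
    have "eventually (\<lambda>v. v \<in> {v. v + c \<noteq> 0}) (nhds w)"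
      using eventually_nhds_in_open[OF op, of w] Suc.prems by simp
    then show ?thesis by (rule eventually_mono) (rule Suc.IH, simp)
  qed
  have d: "((\<lambda>v. (-1)^j * fact j * inverse (v+c) ^ Suc j) has_field_derivative
            (-1)^(Suc j) * fact (Suc j) * inverse (w+c) ^ Suc (Suc j)) (at w)"
  proof -
    have d1: "((\<lambda>v. (-1)^j * fact j * inverse (v+c) ^ Suc j) has_field_derivative
      (-1)^j * fact j * ((1 + of_nat j) * (- (inverse (w+c) * (1 + 0) * inverse (w+c)) * inverse (w+c) ^ j))) (at w)"
      by (rule DERIV_cmult[OF DERIV_power_Suc[OF DERIV_inverse'[OF DERIV_add[OF DERIV_ident DERIV_const]]]]) (use Suc.prems in simp)
    have eq: "(-1)^j * fact j * ((1 + of_nat j) * (- (inverse (w+c) * (1 + 0) * inverse (w+c)) * inverse (w+c) ^ j))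
       = (-1)^(Suc j) * fact (Suc j) * (inverse (w+c) ^ Suc (Suc j) :: complex)"
      by (simp add: algebra_simps)
    show ?thesis using d1 unfolding eq .
  qed
  have "(deriv ^^ Suc j) (\<lambda>w. inverse (w + c)) w = deriv ((deriv ^^ j) (\<lambda>w. inverse (w + c))) w" by simp
  also have "\<dots> = deriv (\<lambda>v. (-1)^j * fact j * inverse (v+c) ^ Suc j) w"
    by (rule deriv_cong_ev[OF ev refl])
  also have "\<dots> = (-1)^(Suc j) * fact (Suc j) * inverse (w+c) ^ Suc (Suc j)"
    by (rule DERIV_imp_deriv[OF d])
  finally show ?case .
qed

definition cutS :: "complex \<Rightarrow> complex set" where "cutS c = {w. w + c \<notin> \<real>\<^sub>\<le>\<^sub>0}"

lemma open_cutS: "open (cutS c)"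
proof -
  have "cutS c = (\<lambda>w. w + c) -` (- \<real>\<^sub>\<le>\<^sub>0)" unfolding cutS_def by auto
  moreover have "open ((\<lambda>w. w + c) -` (- \<real>\<^sub>\<le>\<^sub>0))"
    by (rule open_vimage) (auto intro: continuous_intros)
  ultimately show ?thesis by simp
qed

lemma cutS_nz: "w \<in> cutS c \<Longrightarrow> w + c \<noteq> 0"
  unfolding cutS_def by auto

lemma hol_Ln_c: "(\<lambda>w. Ln (w + c)) holomorphic_on cutS c"
  by (rule holomorphic_on_Ln') (auto simp: cutS_def intro: holomorphic_intros)

lemma hol_pLn: "(\<lambda>w. (w + c)^k * Ln (w + c)) holomorphic_on cutS c"
  by (intro holomorphic_intros hol_Ln_c)

lemma deriv_pLn:
  assumes "v \<in> cutS c"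
  shows "((\<lambda>w. (w + c)^Suc k * Ln (w + c)) has_field_derivative
          of_nat (Suc k) * ((v + c)^k * Ln (v + c)) + (v + c)^k) (at v)"
proof -
  have l: "((\<lambda>w. Ln (w + c)) has_field_derivative inverse (v + c) * 1) (at v)"
    using DERIV_chain2[OF has_field_derivative_Ln DERIV_add[OF DERIV_ident DERIV_const], of "v" c]
    using assms by (simp add: cutS_def)
  have p: "((\<lambda>w. (w + c)^Suc k) has_field_derivative (1 + of_nat k) * ((1 + 0) * (v + c)^k)) (at v)"
    by (rule DERIV_power_Suc[OF DERIV_add[OF DERIV_ident DERIV_const]])
  have d: "((\<lambda>w. (w + c)^Suc k * Ln (w + c)) has_field_derivative
       (1 + of_nat k) * ((1 + 0) * (v + c)^k) * Ln (v + c) + inverse (v + c) * 1 * (v + c)^Suc k) (at v)"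
    by (rule DERIV_mult[OF p l])
  have eq: "(1 + of_nat k) * ((1 + 0) * (v + c)^k) * Ln (v + c) + inverse (v + c) * 1 * (v + c)^Suc k
      = of_nat (Suc k) * ((v + c)^k * Ln (v + c)) + (v + c)^k"
    using cutS_nz[OF assms] by (simp add: field_simps)
  show ?thesis using d unfolding eq .
qed

lemma D2:
  assumes "w \<in> cutS c"
  shows "(deriv ^^ Suc k) (\<lambda>w. (w + c)^k * Ln (w + c)) w = fact k * inverse (w + c)"
  using assms
proof (induction k arbitrary: w)
  case 0
  have l: "((\<lambda>w. (w + c)^0 * Ln (w + c)) has_field_derivative inverse (w + c) * 1) (at w)"
    using DERIV_chain2[OF has_field_derivative_Ln DERIV_add[OF DERIV_ident DERIV_const], of "w" c]
    using 0 by (simp add: cutS_def)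
  show ?case using DERIV_imp_deriv[OF l] by simp
next
  case (Suc k w)
  define G where "G v = of_nat (Suc k) * ((v + c)^k * Ln (v + c)) + (v + c)^k" for v
  have hG: "G holomorphic_on cutS c" unfolding G_def
    by (intro holomorphic_intros hol_pLn)
  have hdF: "deriv (\<lambda>w. (w + c)^Suc k * Ln (w + c)) holomorphic_on cutS c"
    by (intro holomorphic_deriv hol_pLn open_cutS)
  have eqG: "deriv (\<lambda>w. (w + c)^Suc k * Ln (w + c)) v = G v" if "v \<in> cutS c" for v
    unfolding G_def by (rule DERIV_imp_deriv[OF deriv_pLn[OF that]])
  have "(deriv ^^ Suc (Suc k)) (\<lambda>w. (w + c)^Suc k * Ln (w + c)) w
     = (deriv ^^ Suc k) (deriv (\<lambda>w. (w + c)^Suc k * Ln (w + c))) w"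
    by (simp only: funpow_Suc_right[of _ deriv] o_apply)
  also have "\<dots> = (deriv ^^ Suc k) G w"
    by (rule higher_deriv_transform_within_open[OF hdF hG open_cutS Suc.prems eqG])
  also have "\<dots> = (deriv ^^ Suc k) (\<lambda>v. of_nat (Suc k) * ((v + c)^k * Ln (v + c))) w
                 + (deriv ^^ Suc k) (\<lambda>v. (v + c)^k) w"
    unfolding G_def
    by (rule higher_deriv_add[OF _ _ open_cutS Suc.prems]) (intro holomorphic_intros hol_pLn)+
  also have "(deriv ^^ Suc k) (\<lambda>v. of_nat (Suc k) * ((v + c)^k * Ln (v + c))) w
      = of_nat (Suc k) * (fact k * inverse (w + c))"
    by (simp only: higher_deriv_cmult[OF hol_pLn Suc.prems open_cutS] Suc.IH[OF Suc.prems])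
  also have "(deriv ^^ Suc k) (\<lambda>v. (v + c)^k) w = 0"
  proof -
    have "(\<lambda>v. (v + c)^k) = (\<lambda>v. (v - (-c))^k)" by simp
    then show ?thesis by (simp only: higher_deriv_power) (simp add: pochhammer_0_left)
  qed
  finally show ?case by simp
qed

lemma higher_deriv_sum:
  fixes f :: "nat \<Rightarrow> complex \<Rightarrow> complex"
  assumes "finite I" "\<And>i. i \<in> I \<Longrightarrow> f i holomorphic_on S" "open S" "z \<in> S"
  shows "(deriv ^^ j) (\<lambda>w. \<Sum>i\<in>I. f i w) z = (\<Sum>i\<in>I. (deriv ^^ j) (f i) z)"
  using assms(1,2)
proof (induction I rule: finite_induct)
  case empty then show ?case by simp
next
  case (insert a I)
  have "(deriv ^^ j) (\<lambda>w. \<Sum>i\<in>insert a I. f i w) z = (deriv ^^ j) (\<lambda>w. f a w + (\<Sum>i\<in>I. f i w)) z"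
    using insert.hyps by simp
  also have "\<dots> = (deriv ^^ j) (f a) z + (deriv ^^ j) (\<lambda>w. \<Sum>i\<in>I. f i w) z"
    by (rule higher_deriv_add[OF _ _ assms(3,4)]) (use insert.prems in \<open>auto intro!: holomorphic_on_sum\<close>)
  finally show ?case using insert by simp
qed

lemma D3:
  assumes "k < m" "z \<in> cutS c"
  shows "(deriv ^^ m) (\<lambda>w. (w + c)^k * Ln (w + c)) z =
     fact k * ((-1)^(m-k-1) * fact (m-k-1) * inverse (z + c) ^ (m-k))"
proof -
  have mm: "m = (m-k-1) + Suc k" using assms by simp
  have hD: "(deriv ^^ Suc k) (\<lambda>w. (w + c)^k * Ln (w + c)) holomorphic_on cutS c"
    by (intro holomorphic_higher_deriv hol_pLn open_cutS)
  have hI: "(\<lambda>w. fact k * inverse (w + c)) holomorphic_on cutS c"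
    by (intro holomorphic_intros) (auto dest: cutS_nz)
  have "(deriv ^^ m) (\<lambda>w. (w + c)^k * Ln (w + c)) z
      = (deriv ^^ (m-k-1)) ((deriv ^^ Suc k) (\<lambda>w. (w + c)^k * Ln (w + c))) z"
    by (subst mm) (simp only: funpow_add o_apply)
  also have "\<dots> = (deriv ^^ (m-k-1)) (\<lambda>w. fact k * inverse (w + c)) z"
    by (rule higher_deriv_transform_within_open[OF hD hI open_cutS assms(2) D2])
  also have "\<dots> = fact k * (deriv ^^ (m-k-1)) (\<lambda>w. inverse (w + c)) z"
    by (rule higher_deriv_cmult[OF _ assms(2) open_cutS]) (auto intro!: holomorphic_intros dest: cutS_nz)
  also have "\<dots> = fact k * ((-1)^(m-k-1) * fact (m-k-1) * inverse (z + c) ^ Suc (m-k-1))"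
    by (simp only: D1[OF cutS_nz[OF assms(2)]])
  also have "Suc (m-k-1) = m - k" using assms by simp
  finally show ?thesis .
qed


lemma termL0:
  fixes P s C Q T F1 s' F2 I U r :: complex
  assumes "s * s' = r" "T \<noteq> 0"
  shows "P * s * C * Q / T * F1 * s' * F2 * (I * U) = P * r * I * (Q * F1 * F2 * (C * U / T))"
proof -
  have "P * s * C * Q / T * F1 * s' * F2 * (I * U) = (s * s') * (P * I * (Q * F1 * F2 * (C * U / T)))"
    using assms(2) by (simp add: field_simps)
  then show ?thesis using assms(1) by (simp add: mult_ac)
qed

lemma termL:
  fixes c u Q F1 F2 :: complex
  assumes km: "k < m" and u: "u \<noteq> 0"
  shows "(-c)^(n+k) * Q / 2^k * F1 * (-1)^(m-k-1) * F2 * inverse u ^ (m-k)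
       = (-c)^n * (-1)^(m+1) * inverse u ^ m * (Q * F1 * F2 * (c*u/2)^k)"
proof -
  have a: "inverse u ^ (m-k) = inverse u ^ m * u^k"
  proof -
    have "inverse u ^ m = inverse u ^ (m-k) * inverse u ^ k"
      using km by (simp add: power_add[symmetric])
    then show ?thesis using u by (simp add: power_inverse[symmetric] field_simps)
  qed
  have s1: "((-1)::complex)^k * (-1)^(m-k-1) = (-1)^(m+1)"
  proof -
    have "k + (m-k-1) + 2 = m + 1" using km by simp
    then have "((-1)::complex)^(k + (m-k-1)) = (-1)^(m+1)"
      by (metis (no_types, lifting) power_add power2_minus power_one mult.right_neutral one_power2)
    then show ?thesis by (simp add: power_add)
  qed
  have s2: "(-c)^(n+k) = (-c)^n * (-1)^k * c^k"
    by (simp only: power_add power_minus[of c k] mult.assoc)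
  have s3: "(c*u/2)^k = c^k * u^k / 2^k" by (simp add: power_mult_distrib power_divide)
  show ?thesis unfolding a s2 s3
    by (rule termL0[OF s1]) simp
qed

lemma branch_gen:
  fixes p q :: complex and m :: nat
  assumes "p \<noteq> 0" "q \<noteq> 0"
  shows "p powr (- (of_nat m / 2)) * q powr (- (of_nat m / 2)) *
     (p powr (of_nat m / 2) * q powr (- (of_nat m / 2))) = inverse q ^ m"
proof -
  define a :: complex where "a = of_nat m / 2"
  have e1: "p powr (- a) * p powr a = 1"
  proof -
    have "p powr (- a) * p powr a = p powr (- a + a)" by (rule powr_add[symmetric])
    also have "\<dots> = 1" using assms(1) by (simp add: powr_def)
    finally show ?thesis .
  qed
  have e2: "q powr (- a) * q powr (- a) = inverse q ^ m"
  proof -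
    have "q powr (- a) * q powr (- a) = q powr (- a + - a)" by (rule powr_add[symmetric])
    also have "- a + - a = - of_nat m" unfolding a_def by simp
    also have "q powr (- of_nat m) = inverse (q ^ m)" using assms(2) by (simp add: powr_minus powr_nat')
    finally show ?thesis by (simp add: power_inverse)
  qed
  have "p powr (- a) * q powr (- a) * (p powr a * q powr (- a))
      = (p powr (- a) * p powr a) * (q powr (- a) * q powr (- a))"
    by (simp only: mult_ac)
  then show ?thesis using e1 e2 unfolding a_def by simp
qed

lemma branch_p:
  fixes z :: complex and m :: nat
  assumes "z - 1 \<noteq> 0" "z + 1 \<noteq> 0"
  shows "(z - 1) powr (- (of_nat m / 2)) * (z + 1) powr (- (of_nat m / 2)) *
     ((z - 1) powr (of_nat m / 2) * (z + 1) powr (- (of_nat m / 2))) = inverse (z+1) ^ m"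
  by (rule branch_gen[OF assms])

lemma branch_m:
  fixes z :: complex and m :: nat
  assumes "z - 1 \<noteq> 0" "z + 1 \<noteq> 0"
  shows "(z - 1) powr (- (of_nat m / 2)) * (z + 1) powr (- (of_nat m / 2)) *
     ((z + 1) powr (of_nat m / 2) * (z - 1) powr (- (of_nat m / 2))) = inverse (z-1) ^ m"
  using branch_gen[OF assms(2,1), of m] by (simp only: mult.commute[of "(z - 1) powr _" "(z + 1) powr _"])

theorem mainTheorem6:
  fixes m n :: nat and eps :: int and z :: complex
  assumes "n < m"
    and "eps = 1 \<or> eps = -1"
    and "z \<notin> {w. Im w = 0 \<and> Re w \<le> 1}"
  shows "(deriv ^^ m) (\<lambda>w. legendreP n w * Ln (w + of_int eps)) z =
    (- of_int eps) ^ n * (-1) ^ (m + 1) * fact (n + m) * fact (m - n - 1) *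
    ((z - 1) powr (- (of_nat m / 2)) * (z + 1) powr (- (of_nat m / 2))) *
    assocP_neg n m eps z"
proof -
  define c :: complex where "c = of_int eps"
  have c2: "c = 1 \<or> c = -1" using assms(2) unfolding c_def by auto
  have zm: "z - 1 \<noteq> 0" "z + 1 \<noteq> 0" using assms(3) by (auto simp: complex_eq_iff)
  have zS: "z \<in> cutS c"
    using c2 assms(3) by (auto simp: cutS_def complex_nonpos_Reals_iff)
  define u where "u = z + c"
  have u0: "u \<noteq> 0" unfolding u_def using cutS_nz[OF zS] .
  define b where "b k = (-c)^(n+k) * (of_nat (n choose k) * of_nat ((n+k) choose k)) / 2^k" for k
  have Pexp: "legendreP n w = (\<Sum>k\<le>n. b k * (w + c)^k)" for w
  proof (cases "c = 1")
    case True
    show ?thesis unfolding legendre_alt[of n w] b_def True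
      by (rule sum.cong[OF refl]) (simp add: power_divide)
  next
    case False
    then have c1: "c = -1" using c2 by simp
    show ?thesis unfolding legendreP_def b_def c1
      by (rule sum.cong[OF refl]) (simp add: power_divide)
  qed
  have feq: "(\<lambda>w. legendreP n w * Ln (w + of_int eps)) = (\<lambda>w. \<Sum>k\<le>n. b k * ((w + c)^k * Ln (w + c)))"
    unfolding Pexp c_def[symmetric] by (simp add: sum_distrib_right mult.assoc)
  have "(deriv ^^ m) (\<lambda>w. legendreP n w * Ln (w + of_int eps)) z
      = (\<Sum>k\<le>n. (deriv ^^ m) (\<lambda>w. b k * ((w + c)^k * Ln (w + c))) z)"
    unfolding feq by (rule higher_deriv_sum[OF _ _ open_cutS zS]) (auto intro!: holomorphic_intros hol_pLn)
  also have "\<dots> = (\<Sum>k\<le>n. b k * (fact k * ((-1)^(m-k-1) * fact (m-k-1) * inverse u ^ (m-k))))"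
  proof (rule sum.cong[OF refl])
    fix k assume "k \<in> {..n}"
    then have km: "k < m" using assms(1) by simp
    show "(deriv ^^ m) (\<lambda>w. b k * ((w + c)^k * Ln (w + c))) z = b k * (fact k * ((-1)^(m-k-1) * fact (m-k-1) * inverse u ^ (m-k)))"
      unfolding u_def by (simp only: higher_deriv_cmult[OF hol_pLn zS open_cutS] D3[OF km zS])
  qed
  also have "\<dots> = (\<Sum>k\<le>n. (-c)^n * (-1)^(m+1) * inverse u ^ m *
        (of_nat (n choose k) * of_nat ((n+k) choose k) * fact k * fact (m-k-1) * (c*u/2)^k))"
  proof (rule sum.cong[OF refl])
    fix k assume "k \<in> {..n}"
    then have km: "k < m" using assms(1) by simp
    show "b k * (fact k * ((-1)^(m-k-1) * fact (m-k-1) * inverse u ^ (m-k))) =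
      (-c)^n * (-1)^(m+1) * inverse u ^ m *
        (of_nat (n choose k) * of_nat ((n+k) choose k) * fact k * fact (m-k-1) * (c*u/2)^k)"
      using termL[OF km u0, of c n "of_nat (n choose k) * of_nat ((n+k) choose k)" "fact k" "fact (m-k-1)"]
      unfolding b_def by (simp add: mult_ac)
  qed
  also have "\<dots> = (-c)^n * (-1)^(m+1) * inverse u ^ m *
       (fact (n+m) * fact (m-n-1) / fact m * hyp2F1 (- of_nat n) (of_nat n + 1) (1 + of_nat m) (1 - c*u/2))"
    by (simp only: KI[OF assms(1)] sum_distrib_left)
  also have "1 - c*u/2 = (1 - of_int eps * z) / 2"
    unfolding u_def c_def[symmetric] using c2 by (auto simp: field_simps)
  also have "(-c)^n * (-1)^(m+1) * inverse u ^ m *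
       (fact (n+m) * fact (m-n-1) / fact m * hyp2F1 (- of_nat n) (of_nat n + 1) (1 + of_nat m) ((1 - of_int eps * z) / 2))
     = (- of_int eps) ^ n * (-1) ^ (m + 1) * fact (n + m) * fact (m - n - 1) *
    ((z - 1) powr (- (of_nat m / 2)) * (z + 1) powr (- (of_nat m / 2))) *
    assocP_neg n m eps z"
  proof -
    have br: "(z - 1) powr (- (of_nat m / 2)) * (z + 1) powr (- (of_nat m / 2)) *
      (if eps = 1 then (z - 1) powr (of_nat m / 2) * (z + 1) powr (- (of_nat m / 2))
      else (z + 1) powr (of_nat m / 2) * (z - 1) powr (- (of_nat m / 2))) = inverse u ^ m"
    proof (cases "eps = 1")
      case True
      then have "c = 1" unfolding c_def by simp
      then show ?thesis using True branch_p[OF zm] unfolding u_def by simp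
    next
      case False
      then have "c = -1" "eps \<noteq> 1" using assms(2) unfolding c_def by auto
      then show ?thesis using branch_m[OF zm] unfolding u_def by simp
    qed
    show ?thesis unfolding assocP_neg_def c_def[symmetric] br[symmetric]
      by (simp add: mult_ac)
  qed
  finally show ?thesis .
qed

end
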